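(* Let $\Lambda_1,\Lambda_2$ be finite sets of formulas and let $\Gamma_1,\Gamma_2,\Delta_1,\Delta_2$ be finite multisets of formulas such that the sequent $\Gamma_1,\Gamma_2\Rightarrow\Delta_1,\Delta_2$ is provable in $\mathsf{Grz}_\infty$. Then there exists a formula $I$ such that $\mathit{pos}(I)\subseteq\mathit{neg}(\Gamma_1\Rightarrow\Delta_1)\cap\mathit{pos}(\Gamma_2\Rightarrow\Delta_2)$, $\mathit{neg}(I)\subseteq\mathit{pos}(\Gamma_1\Rightarrow\Delta_1)\cap\mathit{neg}(\Gamma_2\Rightarrow\Delta_2)$, and $$\mathsf{Grz}\vdash\bigwedge(\Lambda_1^\ast\cup\Gamma_1)\to\bigvee(\Delta_1\cup\{I\})\quad\text{and}\quad \mathsf{Grz}\vdash\bigwedge(\Lambda_2^\ast\cup\{I\}\cup\Gamma_2)\to\bigvee\Delta_2,$$ where $\Lambda^\ast=\{\Box(A\to\Box A)\mid A\in\Lambda\}$.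
   Context: Formulas are built from $\bot$ and atomic propositions using $\to$ and $\Box$; $\neg A:=A\to\bot$, $\top:=\neg\bot$, $A\wedge B:=\neg(A\to\neg B)$, $A\vee B:=\neg A\to B$, $\Diamond A:=\neg\Box\neg A$; empty conjunction is $\top$ and empty disjunction is $\bot$. The logic $\mathsf{Grz}$ is axiomatized by all Boolean tautologies, $\Box(A\to B)\to(\Box A\to\Box B)$, $\Box A\to\Box\Box A$, $\Box A\to A$, $\Box(\Box(A\to\Box A)\to A)\to\Box A$, with modus ponens and necessitation $A/\Box A$. A sequent is $\Gamma\Rightarrow\Delta$ with $\Gamma,\Delta$ finite multisets of formulas; $\Box\Pi$ denotes $\{\Box B:B\in\Pi\}$. The calculus $\mathsf{Grz}_\infty$ has initial sequents $\Gamma,p\Rightarrow p,\Delta$ ($p$ atomic), $\Gamma,\bot\Rightarrow\Delta$, and rules $(\to_L)$ from $\Gamma,B\Rightarrow\Delta$ and $\Gamma\Rightarrow A,\Delta$ infer $\Gamma,A\to B\Rightarrow\Delta$; $(\to_R)$ from $\Gamma,A\Rightarrow B,\Delta$ infer $\Gamma\Rightarrow A\to B,\Delta$; $(\mathsf{refl})$ from $\Gamma,B,\Box B\Rightarrow\Delta$ infer $\Gamma,\Box B\Rightarrow\Delta$; $(\Box)$ from left premise $\Gamma,\Box\Pi\Rightarrow A,\Delta$ and right premise $\Box\Pi\Rightarrow A$ infer $\Gamma,\Box\Pi\Rightarrow\Box A,\Delta$. An $\infty$-proof is a possibly infinite tree of sequents built by these rules with leaves labelled by initial sequents, in which every infinite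 branch passes through a right premise of $(\Box)$ infinitely often; a sequent is provable if it labels the root of an $\infty$-proof. For a formula or set of formulas $X$, $\mathit{pos}(X)$ ($\mathit{neg}(X)$) is the set of atoms with a positive (negative) occurrence in $X$, polarity being standard: $p$ is positive in $p$, polarity is preserved in $B$ within $A\to B$ and $\Box B$, and reversed in $A$ within $A\to B$. For a sequent, $\mathit{pos}(\Gamma\Rightarrow\Delta)=\mathit{pos}(\Delta)\cup\mathit{neg}(\Gamma)$ and $\mathit{neg}(\Gamma\Rightarrow\Delta)=\mathit{neg}(\Delta)\cup\mathit{pos}(\Gamma)$. *)

theory Defs
  imports Main "HOL-Library.Multiset"
begin

datatype 'a fm = Bot | At 'a | Imp "'a fm" "'a fm" | Box "'a fm"

definition Neg :: "'a fm \<Rightarrow> 'a fm" where "Neg A = Imp A Bot"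
definition Top :: "'a fm" where "Top = Neg Bot"
definition And :: "'a fm \<Rightarrow> 'a fm \<Rightarrow> 'a fm" where "And A B = Neg (Imp A (Neg B))"
definition Or :: "'a fm \<Rightarrow> 'a fm \<Rightarrow> 'a fm" where "Or A B = Imp (Neg A) B"
definition Dia :: "'a fm \<Rightarrow> 'a fm" where "Dia A = Neg (Box (Neg A))"

fun conj :: "'a fm list \<Rightarrow> 'a fm" where
  "conj [] = Top"
| "conj (A # As) = And A (conj As)"

fun disj :: "'a fm list \<Rightarrow> 'a fm" where
  "disj [] = Bot"
| "disj (A # As) = Or A (disj As)"

text \<open>Boolean tautologies: formulas true under every valuation treating atoms and boxed
formulas as propositional variables.\<close>
fun peval :: "('a fm \<Rightarrow> bool) \<Rightarrow> 'a fm \<Rightarrow> bool" where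
  "peval v Bot = False"
| "peval v (At p) = v (At p)"
| "peval v (Imp A B) = (peval v A \<longrightarrow> peval v B)"
| "peval v (Box A) = v (Box A)"

definition taut :: "'a fm \<Rightarrow> bool" where "taut A = (\<forall>v. peval v A)"

inductive Grz :: "'a fm \<Rightarrow> bool" where
  taut: "taut A \<Longrightarrow> Grz A"
| K: "Grz (Imp (Box (Imp A B)) (Imp (Box A) (Box B)))"
| four: "Grz (Imp (Box A) (Box (Box A)))"
| T: "Grz (Imp (Box A) A)"
| grz: "Grz (Imp (Box (Imp (Box (Imp A (Box A))) A)) (Box A))"
| mp: "Grz (Imp A B) \<Longrightarrow> Grz A \<Longrightarrow> Grz B"
| nec: "Grz A \<Longrightarrow> Grz (Box A)"

type_synonym 'a sequent = "'a fm multiset \<times> 'a fm multiset"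

datatype rule = Ax | ImpL | ImpR | Refl | BoxR

fun arity :: "rule \<Rightarrow> nat" where
  "arity Ax = 0" | "arity ImpL = 2" | "arity ImpR = 1" | "arity Refl = 1" | "arity BoxR = 2"

text \<open>For ImpL premise 0 is \<open>\<Gamma>,B \<Rightarrow> \<Delta>\<close> and premise 1 is \<open>\<Gamma> \<Rightarrow> A,\<Delta>\<close>;
  for BoxR premise 0 is the left and premise 1 the right premise.\<close>
fun rule_ok :: "rule \<Rightarrow> 'a sequent \<Rightarrow> 'a sequent list \<Rightarrow> bool" where
  "rule_ok Ax (\<Gamma>, \<Delta>) ps \<longleftrightarrow> ps = [] \<and> ((\<exists>p. At p \<in># \<Gamma> \<and> At p \<in># \<Delta>) \<or> Bot \<in># \<Gamma>)"
| "rule_ok ImpL (\<Gamma>, \<Delta>) ps \<longleftrightarrow> (\<exists>\<Gamma>' A B. \<Gamma> = \<Gamma>' + {#Imp A B#} \<and>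
      ps = [(\<Gamma>' + {#B#}, \<Delta>), (\<Gamma>', {#A#} + \<Delta>)])"
| "rule_ok ImpR (\<Gamma>, \<Delta>) ps \<longleftrightarrow> (\<exists>\<Delta>' A B. \<Delta> = {#Imp A B#} + \<Delta>' \<and>
      ps = [(\<Gamma> + {#A#}, {#B#} + \<Delta>')])"
| "rule_ok Refl (\<Gamma>, \<Delta>) ps \<longleftrightarrow> (\<exists>\<Gamma>' B. \<Gamma> = \<Gamma>' + {#Box B#} \<and>
      ps = [(\<Gamma>' + {#B#} + {#Box B#}, \<Delta>)])"
| "rule_ok BoxR (\<Gamma>, \<Delta>) ps \<longleftrightarrow> (\<exists>\<Gamma>' \<Pi> \<Delta>' A. \<Gamma> = \<Gamma>' + image_mset Box \<Pi> \<and>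
      \<Delta> = {#Box A#} + \<Delta>' \<and>
      ps = [(\<Gamma>' + image_mset Box \<Pi>, {#A#} + \<Delta>'), (image_mset Box \<Pi>, {#A#})])"

text \<open>An \<open>\<infinity>\<close>-proof as a (possibly infinite) tree: nodes are positions (lists of child
  indices), each node carries a sequent and a rule; the children of a node are exactly the
  positions \<open>p @ [i]\<close> with \<open>i < arity\<close>.\<close>
definition inf_proof :: "nat list set \<Rightarrow> (nat list \<Rightarrow> 'a sequent) \<Rightarrow> (nat list \<Rightarrow> rule) \<Rightarrow> bool" where
  "inf_proof N lab rl \<longleftrightarrow>
     [] \<in> N \<and>
     (\<forall>p i. p @ [i] \<in> N \<longrightarrow> p \<in> N) \<and>
     (\<forall>p\<in>N. \<forall>i. (p @ [i] \<in> N \<longleftrightarrow> i < arity (rl p))) \<and>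
     (\<forall>p\<in>N. rule_ok (rl p) (lab p) (map (\<lambda>i. lab (p @ [i])) [0..<arity (rl p)])) \<and>
     (\<forall>f :: nat \<Rightarrow> nat list. f 0 = [] \<and> (\<forall>n. f (Suc n) \<in> N \<and> (\<exists>i. f (Suc n) = f n @ [i]))
        \<longrightarrow> infinite {n. rl (f n) = BoxR \<and> f (Suc n) = f n @ [1]})"

definition Grz_inf_provable :: "'a sequent \<Rightarrow> bool" where
  "Grz_inf_provable S \<longleftrightarrow> (\<exists>N lab rl. inf_proof N lab rl \<and> lab [] = S)"

fun pos :: "'a fm \<Rightarrow> 'a set" and neg :: "'a fm \<Rightarrow> 'a set" where
  "pos Bot = {}" | "neg Bot = {}"
| "pos (At p) = {p}" | "neg (At p) = {}"
| "pos (Imp A B) = neg A \<union> pos B" | "neg (Imp A B) = pos A \<union> neg B"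
| "pos (Box A) = pos A" | "neg (Box A) = neg A"

definition pos_ms :: "'a fm multiset \<Rightarrow> 'a set" where "pos_ms M = (\<Union>A\<in>set_mset M. pos A)"
definition neg_ms :: "'a fm multiset \<Rightarrow> 'a set" where "neg_ms M = (\<Union>A\<in>set_mset M. neg A)"

definition pos_seq :: "'a sequent \<Rightarrow> 'a set" where
  "pos_seq S = pos_ms (snd S) \<union> neg_ms (fst S)"
definition neg_seq :: "'a sequent \<Rightarrow> 'a set" where
  "neg_seq S = neg_ms (snd S) \<union> pos_ms (fst S)"

definition star :: "'a fm set \<Rightarrow> 'a fm set" where
  "star \<Lambda> = {Box (Imp A (Box A)) | A. A \<in> \<Lambda>}"

end

theory Submission
  imports Defs
begin

lemma peval_defs[simp]: "peval v (Neg A) = (\<not> peval v A)" "peval v Top"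
  "peval v (And A B) = (peval v A \<and> peval v B)" "peval v (Or A B) = (peval v A \<or> peval v B)"
  "peval v (Dia A) = (\<not> v (Box (Neg A)))"
  by (auto simp: Neg_def Top_def And_def Or_def Dia_def)

lemma peval_conj[simp]: "peval v (conj xs) = (\<forall>x\<in>set xs. peval v x)"
  by (induction xs) (auto simp: And_def Neg_def Top_def)
lemma peval_disj[simp]: "peval v (disj ys) = (\<exists>y\<in>set ys. peval v y)"
  by (induction ys) (auto simp: Or_def Neg_def)

lemma Grz_prop: "\<forall>A\<in>set Fs. Grz A \<Longrightarrow> (\<forall>v. (\<forall>A\<in>set Fs. peval v A) \<longrightarrow> peval v C) \<Longrightarrow> Grz C"
proof (induction Fs arbitrary: C)
  case Nil
  then show ?case by (auto intro: Grz.taut simp: taut_def)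
next
  case (Cons F Fs)
  have "Grz (Imp F C)" using Cons.prems by (intro Cons.IH) auto
  then show ?case using Cons.prems Grz.mp by auto
qed

fun imps :: "'a fm list \<Rightarrow> 'a fm \<Rightarrow> 'a fm" where
  "imps [] C = C" | "imps (X # Xs) C = Imp X (imps Xs C)"

lemma peval_imps[simp]: "peval v (imps Xs C) = ((\<forall>x\<in>set Xs. peval v x) \<longrightarrow> peval v C)"
  by (induction Xs) auto

lemma box_imps: "Grz (Imp (Box (imps Xs C)) (imps (map Box Xs) (Box C)))"
proof (induction Xs)
  case Nil
  then show ?case by (auto intro: Grz.taut simp: taut_def)
next
  case (Cons X Xs)
  show ?case
    by (rule Grz_prop[of "[Imp (Box (Imp X (imps Xs C))) (Imp (Box X) (Box (imps Xs C))), Imp (Box (imps Xs C)) (imps (map Box Xs) (Box C))]"])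
       (auto intro: Grz.K Cons.IH)
qed

lemma nec_imps: "Grz (imps Xs C) \<Longrightarrow> Grz (imps (map Box Xs) (Box C))"
  using Grz.mp[OF box_imps Grz.nec] by blast

lemma boxed_imps:
  assumes "Grz (imps Xs C)" "\<forall>x\<in>set Xs. \<exists>B. x = Box B"
  shows "Grz (imps Xs (Box C))"
proof (rule Grz_prop[of "imps (map Box Xs) (Box C) # map (\<lambda>x. Imp x (Box x)) Xs"])
  show "\<forall>A\<in>set (imps (map Box Xs) (Box C) # map (\<lambda>x. Imp x (Box x)) Xs). Grz A"
    using nec_imps[OF assms(1)] assms(2) by (auto intro: Grz.four)
qed auto


definition G :: "'a fm set \<Rightarrow> 'a fm set \<Rightarrow> bool" where
  "G X Y \<longleftrightarrow> (\<forall>xs ys. set xs = X \<and> set ys = Y \<longrightarrow> Grz (Imp (conj xs) (disj ys)))"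

definition sq :: "('a fm \<Rightarrow> bool) \<Rightarrow> 'a fm set \<Rightarrow> 'a fm set \<Rightarrow> bool" where
  "sq v X Y \<longleftrightarrow> ((\<forall>x\<in>X. peval v x) \<longrightarrow> (\<exists>y\<in>Y. peval v y))"

definition lst :: "'a fm set \<Rightarrow> 'a fm list" where "lst X = (SOME xs. set xs = X)"

lemma set_lst: "finite X \<Longrightarrow> set (lst X) = X"
  unfolding lst_def by (metis (mono_tags) finite_list someI_ex)

definition fmG :: "'a fm set \<Rightarrow> 'a fm set \<Rightarrow> 'a fm" where
  "fmG X Y = Imp (conj (lst X)) (disj (lst Y))"

lemma peval_fmG: "finite X \<Longrightarrow> finite Y \<Longrightarrow> peval v (fmG X Y) = sq v X Y"
  by (simp add: fmG_def sq_def set_lst)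

lemma G_fmG: "finite X \<Longrightarrow> finite Y \<Longrightarrow> G X Y \<Longrightarrow> Grz (fmG X Y)"
  by (simp add: G_def fmG_def set_lst)

lemma G_prop:
  assumes "finite X" "finite Y"
    and "\<forall>(X',Y')\<in>set Ss. finite X' \<and> finite Y' \<and> G X' Y'"
    and "\<forall>A\<in>set Fs. Grz A"
    and "\<forall>v. (\<forall>(X',Y')\<in>set Ss. sq v X' Y') \<longrightarrow> (\<forall>A\<in>set Fs. peval v A) \<longrightarrow> sq v X Y"
  shows "G X Y"
  unfolding G_def
proof (intro allI impI)
  fix xs ys assume h: "set xs = X \<and> set ys = Y"
  show "Grz (Imp (conj xs) (disj ys))"
  proof (rule Grz_prop[of "Fs @ map (\<lambda>(X',Y'). fmG X' Y') Ss"])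
    show "\<forall>A\<in>set (Fs @ map (\<lambda>(X', Y'). fmG X' Y') Ss). Grz A"
      using assms(3,4) G_fmG by fastforce
    show "\<forall>v. (\<forall>A\<in>set (Fs @ map (\<lambda>(X', Y'). fmG X' Y') Ss). peval v A) \<longrightarrow> peval v (Imp (conj xs) (disj ys))"
    proof (intro allI impI)
      fix v assume a: "\<forall>A\<in>set (Fs @ map (\<lambda>(X', Y'). fmG X' Y') Ss). peval v A"
      have "\<forall>(X',Y')\<in>set Ss. sq v X' Y'"
        using a assms(3) peval_fmG by fastforce
      then have "sq v X Y" using a assms(5) by auto
      then show "peval v (Imp (conj xs) (disj ys))" using h by (simp add: sq_def)
    qed
  qed
qed

lemma G_box:
  assumes "finite X" "\<forall>x\<in>X. \<exists>B. x = Box B" "G X {C}"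
  shows "G X {Box C}"
proof -
  obtain xs where xs: "set xs = X" using assms(1) finite_list by blast
  have "Grz (Imp (conj xs) (disj [C]))" using assms(3) xs unfolding G_def by (metis empty_set list.simps(15))
  then have "Grz (imps xs C)"
    by (intro Grz_prop[of "[Imp (conj xs) (disj [C])]"]) auto
  then have g: "Grz (imps xs (Box C))" using boxed_imps assms(2) xs by blast
  show ?thesis unfolding G_def
    by (intro allI impI Grz_prop[of "[imps xs (Box C)]"]) (use g xs in auto)
qed

lemma G_grz:
  assumes "finite X" "\<forall>x\<in>X. \<exists>B. x = Box B" "G (insert (Box (Imp A (Box A))) X) {A}"
  shows "G X {Box A}"
proof -
  have "G X {Imp (Box (Imp A (Box A))) A}"
    by (rule G_prop[of _ _ "[(insert (Box (Imp A (Box A))) X, {A})]" "[]"]) (use assms in \<open>auto simp: sq_def\<close>)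
  then have "G X {Box (Imp (Box (Imp A (Box A))) A)}" using G_box assms by blast
  then show ?thesis
    by (intro G_prop[of _ _ "[(X, {Box (Imp (Box (Imp A (Box A))) A)})]" "[Imp (Box (Imp (Box (Imp A (Box A))) A)) (Box A)]"])
       (use assms in \<open>auto simp: sq_def intro: Grz.grz\<close>)
qed

lemma pos_ms_simps[simp]: "pos_ms {#} = {}" "pos_ms (add_mset x M) = pos x \<union> pos_ms M"
  "pos_ms (M + N) = pos_ms M \<union> pos_ms N"
  by (auto simp: pos_ms_def)
lemma neg_ms_simps[simp]: "neg_ms {#} = {}" "neg_ms (add_mset x M) = neg x \<union> neg_ms M"
  "neg_ms (M + N) = neg_ms M \<union> neg_ms N"
  by (auto simp: neg_ms_def)
lemma pos_ms_mono: "M \<subseteq># N \<Longrightarrow> pos_ms M \<subseteq> pos_ms N"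
  by (auto simp: pos_ms_def dest: mset_subset_eqD)
lemma neg_ms_mono: "M \<subseteq># N \<Longrightarrow> neg_ms M \<subseteq> neg_ms N"
  by (auto simp: neg_ms_def dest: mset_subset_eqD)

lemma pn_defs[simp]: "pos (Neg A) = neg A" "neg (Neg A) = pos A" "pos (Top::'a fm) = {}" "neg (Top::'a fm) = {}"
  "pos (And A B) = pos A \<union> pos B" "neg (And A B) = neg A \<union> neg B"
  "pos (Or A B) = pos A \<union> pos B" "neg (Or A B) = neg A \<union> neg B"
  "pos (Dia A) = pos A" "neg (Dia A) = neg A"
  by (auto simp: Neg_def Top_def And_def Or_def Dia_def)

lemma star_fin[simp]: "finite L \<Longrightarrow> finite (star L)"
  unfolding star_def by (simp add: setcompr_eq_image)
lemma star_box: "x \<in> star L \<Longrightarrow> \<exists>B. x = Box B"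
  unfolding star_def by auto
lemma star_insert: "star (insert A L) = insert (Box (Imp A (Box A))) (star L)"
  unfolding star_def by auto

definition Interp where
  "Interp L1 L2 G1 G2 D1 D2 \<longleftrightarrow> (\<exists>I. pos I \<subseteq> neg_seq (G1, D1) \<inter> pos_seq (G2, D2)
     \<and> neg I \<subseteq> pos_seq (G1, D1) \<inter> neg_seq (G2, D2)
     \<and> G (star L1 \<union> set_mset G1) (set_mset D1 \<union> {I})
     \<and> G (star L2 \<union> {I} \<union> set_mset G2) (set_mset D2))"

lemma G_sem: "finite X \<Longrightarrow> finite Y \<Longrightarrow> (\<And>v. sq v X Y) \<Longrightarrow> G X Y"
  by (rule G_prop[of _ _ "[]" "[]"]) auto

lemma G_1: "finite X \<Longrightarrow> finite Y \<Longrightarrow> finite X' \<Longrightarrow> finite Y' \<Longrightarrow> G X' Y' \<Longrightarrow>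
   (\<And>v. sq v X' Y' \<Longrightarrow> sq v X Y) \<Longrightarrow> G X Y"
  by (rule G_prop[of _ _ "[(X',Y')]" "[]"]) auto

lemma G_2: "finite X \<Longrightarrow> finite Y \<Longrightarrow> finite X' \<Longrightarrow> finite Y' \<Longrightarrow> G X' Y' \<Longrightarrow>
   finite X'' \<Longrightarrow> finite Y'' \<Longrightarrow> G X'' Y'' \<Longrightarrow>
   (\<And>v. sq v X' Y' \<Longrightarrow> sq v X'' Y'' \<Longrightarrow> sq v X Y) \<Longrightarrow> G X Y"
  by (rule G_prop[of _ _ "[(X',Y'),(X'',Y'')]" "[]"]) auto

lemma interp_ax:
  assumes "finite L1" "finite L2" "(\<exists>p. At p \<in># G1 + G2 \<and> At p \<in># D1 + D2) \<or> Bot \<in># G1 + G2"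
  shows "Interp L1 L2 G1 G2 D1 D2"
proof -
  have c: "(\<exists>p. At p \<in># G1 \<and> At p \<in># D1) \<or> Bot \<in># G1 \<or> (\<exists>p. At p \<in># G2 \<and> At p \<in># D2) \<or> Bot \<in># G2
    \<or> (\<exists>p. At p \<in># G1 \<and> At p \<in># D2) \<or> (\<exists>p. At p \<in># G2 \<and> At p \<in># D1)"
    using assms(3) by auto
  show ?thesis using c
  proof (elim disjE exE conjE)
    fix p assume a: "At p \<in># G1" "At p \<in># D1"
    show ?thesis unfolding Interp_def
      by (rule exI[of _ Bot]) (use a assms(1,2) in \<open>auto intro!: G_sem simp: sq_def; force\<close>)
  next
    assume a: "Bot \<in># G1"
    show ?thesis unfolding Interp_def
      by (rule exI[of _ Bot]) (use a assms(1,2) in \<open>auto intro!: G_sem simp: sq_def dest!: bspec[where x=Bot]; force\<close>)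
  next
    fix p assume a: "At p \<in># G2" "At p \<in># D2"
    show ?thesis unfolding Interp_def
      by (rule exI[of _ Top]) (use a assms(1,2) in \<open>auto intro!: G_sem simp: sq_def; force\<close>)
  next
    assume a: "Bot \<in># G2"
    show ?thesis unfolding Interp_def
      by (rule exI[of _ Top]) (use a assms(1,2) in \<open>auto intro!: G_sem simp: sq_def dest!: bspec[where x=Bot]; force\<close>)
  next
    fix p assume a: "At p \<in># G1" "At p \<in># D2"
    show ?thesis unfolding Interp_def
      by (rule exI[of _ "At p"]) (use a assms(1,2) in \<open>auto intro!: G_sem simp: sq_def pos_seq_def neg_seq_def pos_ms_def neg_ms_def; force\<close>)
  next
    fix p assume a: "At p \<in># G2" "At p \<in># D1"
    show ?thesis unfolding Interp_def
      by (rule exI[of _ "Neg (At p)"]) (use a assms(1,2) in \<open>auto intro!: G_sem simp: sq_def pos_seq_def neg_seq_def pos_ms_def neg_ms_def; force\<close>)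
  qed
qed

lemmas psd = pos_seq_def neg_seq_def

lemma interp_impL1:
  assumes "finite L1" "finite L2"
    "Interp L1 L2 (add_mset B G1) G2 D1 D2" "Interp L1 L2 G1 G2 (add_mset A D1) D2"
  shows "Interp L1 L2 (add_mset (Imp A B) G1) G2 D1 D2"
proof -
  obtain I0 where I0: "pos I0 \<subseteq> neg_seq (add_mset B G1, D1) \<inter> pos_seq (G2, D2)"
     "neg I0 \<subseteq> pos_seq (add_mset B G1, D1) \<inter> neg_seq (G2, D2)"
     "G (star L1 \<union> set_mset (add_mset B G1)) (set_mset D1 \<union> {I0})"
     "G (star L2 \<union> {I0} \<union> set_mset G2) (set_mset D2)"
    using assms(3) unfolding Interp_def by blast
  obtain I1 where I1: "pos I1 \<subseteq> neg_seq (G1, add_mset A D1) \<inter> pos_seq (G2, D2)"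
     "neg I1 \<subseteq> pos_seq (G1, add_mset A D1) \<inter> neg_seq (G2, D2)"
     "G (star L1 \<union> set_mset G1) (set_mset (add_mset A D1) \<union> {I1})"
     "G (star L2 \<union> {I1} \<union> set_mset G2) (set_mset D2)"
    using assms(4) unfolding Interp_def by blast
  show ?thesis unfolding Interp_def
  proof (intro exI[of _ "Or I0 I1"] conjI)
    show "pos (Or I0 I1) \<subseteq> neg_seq (add_mset (Imp A B) G1, D1) \<inter> pos_seq (G2, D2)"
      using I0(1) I1(1) by (auto simp: psd)
    show "neg (Or I0 I1) \<subseteq> pos_seq (add_mset (Imp A B) G1, D1) \<inter> neg_seq (G2, D2)"
      using I0(2) I1(2) by (auto simp: psd)
    show "G (star L1 \<union> set_mset (add_mset (Imp A B) G1)) (set_mset D1 \<union> {Or I0 I1})"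
      by (rule G_2[OF _ _ _ _ I0(3) _ _ I1(3)]) (use assms(1) in \<open>auto simp: sq_def\<close>)
    show "G (star L2 \<union> {Or I0 I1} \<union> set_mset G2) (set_mset D2)"
      by (rule G_2[OF _ _ _ _ I0(4) _ _ I1(4)]) (use assms(2) in \<open>auto simp: sq_def\<close>)
  qed
qed

lemma interp_impL2:
  assumes "finite L1" "finite L2"
    "Interp L1 L2 G1 (add_mset B G2) D1 D2" "Interp L1 L2 G1 G2 D1 (add_mset A D2)"
  shows "Interp L1 L2 G1 (add_mset (Imp A B) G2) D1 D2"
proof -
  obtain I0 where I0: "pos I0 \<subseteq> neg_seq (G1, D1) \<inter> pos_seq (add_mset B G2, D2)"
     "neg I0 \<subseteq> pos_seq (G1, D1) \<inter> neg_seq (add_mset B G2, D2)"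
     "G (star L1 \<union> set_mset G1) (set_mset D1 \<union> {I0})"
     "G (star L2 \<union> {I0} \<union> set_mset (add_mset B G2)) (set_mset D2)"
    using assms(3) unfolding Interp_def by blast
  obtain I1 where I1: "pos I1 \<subseteq> neg_seq (G1, D1) \<inter> pos_seq (G2, add_mset A D2)"
     "neg I1 \<subseteq> pos_seq (G1, D1) \<inter> neg_seq (G2, add_mset A D2)"
     "G (star L1 \<union> set_mset G1) (set_mset D1 \<union> {I1})"
     "G (star L2 \<union> {I1} \<union> set_mset G2) (set_mset (add_mset A D2))"
    using assms(4) unfolding Interp_def by blast
  show ?thesis unfolding Interp_def
  proof (intro exI[of _ "And I0 I1"] conjI)
    show "pos (And I0 I1) \<subseteq> neg_seq (G1, D1) \<inter> pos_seq (add_mset (Imp A B) G2, D2)"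
      using I0(1) I1(1) by (auto simp: psd)
    show "neg (And I0 I1) \<subseteq> pos_seq (G1, D1) \<inter> neg_seq (add_mset (Imp A B) G2, D2)"
      using I0(2) I1(2) by (auto simp: psd)
    show "G (star L1 \<union> set_mset G1) (set_mset D1 \<union> {And I0 I1})"
      by (rule G_2[OF _ _ _ _ I0(3) _ _ I1(3)]) (use assms(1) in \<open>auto simp: sq_def\<close>)
    show "G (star L2 \<union> {And I0 I1} \<union> set_mset (add_mset (Imp A B) G2)) (set_mset D2)"
      by (rule G_2[OF _ _ _ _ I0(4) _ _ I1(4)]) (use assms(2) in \<open>auto simp: sq_def\<close>)
  qed
qed

lemma G_1F: "finite X \<Longrightarrow> finite Y \<Longrightarrow> finite X' \<Longrightarrow> finite Y' \<Longrightarrow> G X' Y' \<Longrightarrow>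
   \<forall>A\<in>set Fs. Grz A \<Longrightarrow> (\<And>v. sq v X' Y' \<Longrightarrow> \<forall>A\<in>set Fs. peval v A \<Longrightarrow> sq v X Y) \<Longrightarrow> G X Y"
  by (rule G_prop[of _ _ "[(X',Y')]" Fs]) auto

lemma interp_sameF:
  assumes "finite L1" "finite L2" "Interp L1 L2 G1' G2' D1' D2'"
    "neg_seq (G1', D1') \<subseteq> neg_seq (G1, D1)" "pos_seq (G1', D1') \<subseteq> pos_seq (G1, D1)"
    "neg_seq (G2', D2') \<subseteq> neg_seq (G2, D2)" "pos_seq (G2', D2') \<subseteq> pos_seq (G2, D2)"
    "\<forall>A\<in>set Fs. Grz A"
    "\<And>v I. sq v (star L1 \<union> set_mset G1') (set_mset D1' \<union> {I}) \<Longrightarrow> \<forall>A\<in>set Fs. peval v A \<Longrightarrow> sq v (star L1 \<union> set_mset G1) (set_mset D1 \<union> {I})"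
    "\<And>v I. sq v (star L2 \<union> {I} \<union> set_mset G2') (set_mset D2') \<Longrightarrow> \<forall>A\<in>set Fs. peval v A \<Longrightarrow> sq v (star L2 \<union> {I} \<union> set_mset G2) (set_mset D2)"
  shows "Interp L1 L2 G1 G2 D1 D2"
proof -
  obtain I where I: "pos I \<subseteq> neg_seq (G1', D1') \<inter> pos_seq (G2', D2')"
     "neg I \<subseteq> pos_seq (G1', D1') \<inter> neg_seq (G2', D2')"
     "G (star L1 \<union> set_mset G1') (set_mset D1' \<union> {I})"
     "G (star L2 \<union> {I} \<union> set_mset G2') (set_mset D2')"
    using assms(3) unfolding Interp_def by blast
  show ?thesis unfolding Interp_def
  proof (intro exI[of _ I] conjI)
    show "pos I \<subseteq> neg_seq (G1, D1) \<inter> pos_seq (G2, D2)" using I(1) assms(4-7) by blast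
    show "neg I \<subseteq> pos_seq (G1, D1) \<inter> neg_seq (G2, D2)" using I(2) assms(4-7) by blast
    show "G (star L1 \<union> set_mset G1) (set_mset D1 \<union> {I})"
      by (rule G_1F[OF _ _ _ _ I(3) assms(8)]) (use assms(1,9) in auto)
    show "G (star L2 \<union> {I} \<union> set_mset G2) (set_mset D2)"
      by (rule G_1F[OF _ _ _ _ I(4) assms(8)]) (use assms(2,10) in auto)
  qed
qed

lemmas interp_same = interp_sameF[where Fs="[]", simplified]

lemma interp_impR1:
  assumes "finite L1" "finite L2" "Interp L1 L2 (add_mset A G1) G2 (add_mset B D1) D2"
  shows "Interp L1 L2 G1 G2 (add_mset (Imp A B) D1) D2"
  by (rule interp_same[OF assms]) (auto simp: psd sq_def)

lemma interp_impR2: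
  assumes "finite L1" "finite L2" "Interp L1 L2 G1 (add_mset A G2) D1 (add_mset B D2)"
  shows "Interp L1 L2 G1 G2 D1 (add_mset (Imp A B) D2)"
  by (rule interp_same[OF assms]) (auto simp: psd sq_def)

lemma interp_refl1:
  assumes "finite L1" "finite L2" "Interp L1 L2 (add_mset B (add_mset (Box B) G1)) G2 D1 D2"
  shows "Interp L1 L2 (add_mset (Box B) G1) G2 D1 D2"
  by (rule interp_sameF[OF assms, where Fs="[Imp (Box B) B]"]) (auto simp: psd sq_def intro: Grz.T)

lemma interp_refl2:
  assumes "finite L1" "finite L2" "Interp L1 L2 G1 (add_mset B (add_mset (Box B) G2)) D1 D2"
  shows "Interp L1 L2 G1 (add_mset (Box B) G2) D1 D2"
  by (rule interp_sameF[OF assms, where Fs="[Imp (Box B) B]"]) (auto simp: psd sq_def intro: Grz.T)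

lemma pos_in_ms: "x \<in># M \<Longrightarrow> pos x \<subseteq> pos_ms M" by (auto simp: pos_ms_def)
lemma neg_in_ms: "x \<in># M \<Longrightarrow> neg x \<subseteq> neg_ms M" by (auto simp: neg_ms_def)

lemma interp_boxT1:
  assumes "finite L1" "finite L2" "Interp L1 L2 G1 G2 (add_mset A D1) D2" "A \<in> L1"
  shows "Interp L1 L2 G1 G2 (add_mset (Box A) D1) D2"
proof (rule interp_sameF[OF assms(1-3), where Fs="[Imp (Box (Imp A (Box A))) (Imp A (Box A))]"])
  have "Box (Imp A (Box A)) \<in> star L1" using assms(4) by (auto simp: star_def)
  note bx = this
  show "\<And>v I. sq v (star L1 \<union> set_mset G1) (set_mset (add_mset A D1) \<union> {I}) \<Longrightarrow>
           \<forall>A\<in>set [Imp (Box (Imp A (Box A))) (Imp A (Box A))]. peval v A \<Longrightarrow>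
           sq v (star L1 \<union> set_mset G1) (set_mset (add_mset (Box A) D1) \<union> {I})"
  proof -
    fix v I assume h: "sq v (star L1 \<union> set_mset G1) (set_mset (add_mset A D1) \<union> {I})"
      "\<forall>A\<in>set [Imp (Box (Imp A (Box A))) (Imp A (Box A))]. peval v A"
    show "sq v (star L1 \<union> set_mset G1) (set_mset (add_mset (Box A) D1) \<union> {I})" unfolding sq_def
    proof
      assume a: "\<forall>x\<in>star L1 \<union> set_mset G1. peval v x"
      then have "v (Box (Imp A (Box A)))" using bx by force
      hence i: "peval v A \<longrightarrow> v (Box A)" using h(2) by simp
      from h(1) a obtain y where "y \<in> set_mset (add_mset A D1) \<union> {I}" "peval v y" by (auto simp: sq_def)
      with i show "\<exists>y\<in>(set_mset (add_mset (Box A) D1) \<union> {I}). peval v y" by (cases "y = A") auto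
    qed
  qed
qed (auto simp: psd intro: Grz.T)

lemma interp_boxT2:
  assumes "finite L1" "finite L2" "Interp L1 L2 G1 G2 D1 (add_mset A D2)" "A \<in> L2"
  shows "Interp L1 L2 G1 G2 D1 (add_mset (Box A) D2)"
proof (rule interp_sameF[OF assms(1-3), where Fs="[Imp (Box (Imp A (Box A))) (Imp A (Box A))]"])
  have "Box (Imp A (Box A)) \<in> star L2" using assms(4) by (auto simp: star_def)
  note bx = this
  show "\<And>v I. sq v (star L2 \<union> {I} \<union> set_mset G2) (set_mset (add_mset A D2)) \<Longrightarrow>
           \<forall>A\<in>set [Imp (Box (Imp A (Box A))) (Imp A (Box A))]. peval v A \<Longrightarrow>
           sq v (star L2 \<union> {I} \<union> set_mset G2) (set_mset (add_mset (Box A) D2))"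
  proof -
    fix v I assume h: "sq v (star L2 \<union> {I} \<union> set_mset G2) (set_mset (add_mset A D2))"
      "\<forall>A\<in>set [Imp (Box (Imp A (Box A))) (Imp A (Box A))]. peval v A"
    show "sq v (star L2 \<union> {I} \<union> set_mset G2) (set_mset (add_mset (Box A) D2))" unfolding sq_def
    proof
      assume a: "\<forall>x\<in>star L2 \<union> {I} \<union> set_mset G2. peval v x"
      then have "v (Box (Imp A (Box A)))" using bx by force
      hence i: "peval v A \<longrightarrow> v (Box A)" using h(2) by simp
      from h(1) a obtain y where "y \<in> set_mset (add_mset A D2)" "peval v y" by (auto simp: sq_def)
      with i show "\<exists>y\<in>(set_mset (add_mset (Box A) D2)). peval v y" by (cases "y = A") auto
    qed
  qed
qed (auto simp: psd intro: Grz.T)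

lemma interp_box1:
  assumes "finite L1" "finite L2" "\<forall>x\<in>#B1. \<exists>C. x = Box C" "\<forall>x\<in>#B2. \<exists>C. x = Box C"
    "B1 \<subseteq># G1" "B2 \<subseteq># G2" "Box A \<in># D1" "Interp (insert A L1) L2 B1 B2 {#A#} {#}"
  shows "Interp L1 L2 G1 G2 D1 D2"
proof -
  obtain I where I: "pos I \<subseteq> neg_seq (B1, {#A#}) \<inter> pos_seq (B2, {#})"
     "neg I \<subseteq> pos_seq (B1, {#A#}) \<inter> neg_seq (B2, {#})"
     "G (star (insert A L1) \<union> set_mset B1) (set_mset {#A#} \<union> {I})"
     "G (star L2 \<union> {I} \<union> set_mset B2) (set_mset {#})"
    using assms(8) unfolding Interp_def by blast
  have s1: "set_mset B1 \<subseteq> set_mset G1" "set_mset B2 \<subseteq> set_mset G2"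
    using assms(5,6) by (auto simp: set_mset_mono)
  define X where "X = star L1 \<union> set_mset B1 \<union> {Box (Neg I)}"
  have fX: "finite X" and bX: "\<forall>x\<in>X. \<exists>B. x = Box B"
    using assms(1,3) star_box by (auto simp: X_def)
  have "G (insert (Box (Imp A (Box A))) X) {A}"
    by (rule G_1F[OF _ _ _ _ I(3), where Fs="[Imp (Box (Neg I)) (Neg I)]"])
       (use assms(1) in \<open>auto simp: X_def star_insert sq_def intro: Grz.T\<close>)
  then have gX: "G X {Box A}" using G_grz fX bX by blast
  have "sq v (star L1 \<union> set_mset G1) (set_mset D1 \<union> {Dia I})" if h: "sq v X {Box A}" for v
    unfolding sq_def
  proof
    assume a: "\<forall>x\<in>star L1 \<union> set_mset G1. peval v x"
    show "\<exists>y\<in>set_mset D1 \<union> {Dia I}. peval v y"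
    proof (cases "v (Box (Neg I))")
      case True
      then have "\<forall>x\<in>X. peval v x" using a s1 by (auto simp: X_def)
      then have "v (Box A)" using h by (simp add: sq_def)
      then show ?thesis using assms(7) by force
    qed simp
  qed
  then have side1: "G (star L1 \<union> set_mset G1) (set_mset D1 \<union> {Dia I})"
    by (intro G_1[OF _ _ _ _ gX]) (use assms(1) fX in auto)
  have "G (star L2 \<union> set_mset B2) {Neg I}"
    by (rule G_1[OF _ _ _ _ I(4)]) (use assms(2) in \<open>auto simp: sq_def\<close>)
  then have "G (star L2 \<union> set_mset B2) {Box (Neg I)}"
    by (intro G_box) (use assms(2,4) star_box in auto)
  then have side2: "G (star L2 \<union> {Dia I} \<union> set_mset G2) (set_mset D2)"
    by (rule G_1[rotated 4]) (use assms(2) s1 in \<open>auto simp: sq_def\<close>)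
  have p1: "neg A \<subseteq> neg_ms D1" "pos A \<subseteq> pos_ms D1"
    using neg_in_ms[OF assms(7)] pos_in_ms[OF assms(7)] by auto
  show ?thesis unfolding Interp_def
  proof (intro exI[of _ "Dia I"] conjI side1 side2)
    show "pos (Dia I) \<subseteq> neg_seq (G1, D1) \<inter> pos_seq (G2, D2)"
      using I(1) p1 pos_ms_mono[OF assms(5)] neg_ms_mono[OF assms(6)] by (auto simp: psd)
    show "neg (Dia I) \<subseteq> pos_seq (G1, D1) \<inter> neg_seq (G2, D2)"
      using I(2) p1 neg_ms_mono[OF assms(5)] pos_ms_mono[OF assms(6)] by (auto simp: psd)
  qed
qed

lemma interp_box2:
  assumes "finite L1" "finite L2" "\<forall>x\<in>#B1. \<exists>C. x = Box C" "\<forall>x\<in>#B2. \<exists>C. x = Box C"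
    "B1 \<subseteq># G1" "B2 \<subseteq># G2" "Box A \<in># D2" "Interp L1 (insert A L2) B1 B2 {#} {#A#}"
  shows "Interp L1 L2 G1 G2 D1 D2"
proof -
  obtain I where I: "pos I \<subseteq> neg_seq (B1, {#}) \<inter> pos_seq (B2, {#A#})"
     "neg I \<subseteq> pos_seq (B1, {#}) \<inter> neg_seq (B2, {#A#})"
     "G (star L1 \<union> set_mset B1) (set_mset {#} \<union> {I})"
     "G (star (insert A L2) \<union> {I} \<union> set_mset B2) (set_mset {#A#})"
    using assms(8) unfolding Interp_def by blast
  have s1: "set_mset B1 \<subseteq> set_mset G1" "set_mset B2 \<subseteq> set_mset G2"
    using assms(5,6) by (auto simp: set_mset_mono)
  define X where "X = star L2 \<union> set_mset B2 \<union> {Box I}"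
  have fX: "finite X" and bX: "\<forall>x\<in>X. \<exists>B. x = Box B"
    using assms(2,4) star_box by (auto simp: X_def)
  have "G (insert (Box (Imp A (Box A))) X) {A}"
    by (rule G_1F[OF _ _ _ _ I(4), where Fs="[Imp (Box I) I]"])
       (use assms(2) in \<open>auto simp: X_def star_insert sq_def intro: Grz.T\<close>)
  then have gX: "G X {Box A}" using G_grz fX bX by blast
  have "sq v (star L2 \<union> {Box I} \<union> set_mset G2) (set_mset D2)" if h: "sq v X {Box A}" for v
    unfolding sq_def
  proof
    assume a: "\<forall>x\<in>star L2 \<union> {Box I} \<union> set_mset G2. peval v x"
    then have "\<forall>x\<in>X. peval v x" using s1 by (auto simp: X_def)
    then have "v (Box A)" using h by (simp add: sq_def)
    then show "\<exists>y\<in>set_mset D2. peval v y" using assms(7) by force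
  qed
  then have side2: "G (star L2 \<union> {Box I} \<union> set_mset G2) (set_mset D2)"
    by (intro G_1[OF _ _ _ _ gX]) (use assms(2) fX in auto)
  have "G (star L1 \<union> set_mset B1) {I}"
    by (rule G_1[OF _ _ _ _ I(3)]) (use assms(1) in \<open>auto simp: sq_def\<close>)
  then have "G (star L1 \<union> set_mset B1) {Box I}"
    by (intro G_box) (use assms(1,3) star_box in auto)
  then have side1: "G (star L1 \<union> set_mset G1) (set_mset D1 \<union> {Box I})"
    by (rule G_1[rotated 4]) (use assms(1) s1 in \<open>auto simp: sq_def\<close>)
  have p1: "neg A \<subseteq> neg_ms D2" "pos A \<subseteq> pos_ms D2"
    using neg_in_ms[OF assms(7)] pos_in_ms[OF assms(7)] by auto
  show ?thesis unfolding Interp_def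
  proof (intro exI[of _ "Box I"] conjI side1 side2)
    show "pos (Box I) \<subseteq> neg_seq (G1, D1) \<inter> pos_seq (G2, D2)"
      using I(1) p1 pos_ms_mono[OF assms(5)] neg_ms_mono[OF assms(6)] by (auto simp: psd)
    show "neg (Box I) \<subseteq> pos_seq (G1, D1) \<inter> neg_seq (G2, D2)"
      using I(2) p1 neg_ms_mono[OF assms(5)] pos_ms_mono[OF assms(6)] by (auto simp: psd)
  qed
qed

lemma split_box: "(G1::'b multiset) + G2 = G' + BP \<Longrightarrow> \<exists>B1 B2. B1 \<subseteq># G1 \<and> B2 \<subseteq># G2 \<and> B1 + B2 = BP"
proof -
  assume h: "G1 + G2 = G' + BP"
  define B1 where "B1 = BP \<inter># G1"
  have "B1 \<subseteq># BP" "B1 \<subseteq># G1" by (auto simp: B1_def)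
  moreover have "BP - B1 \<subseteq># G2"
  proof -
    have "count G1 x + count G2 x = count G' x + count BP x" for x using h
      by (metis count_union)
    then have "count BP x - count G1 x \<le> count G2 x" for x
      by (metis add.commute diff_le_mono le_add2 diff_add_inverse)
    then show ?thesis unfolding subseteq_mset_def B1_def by simp
  qed
  ultimately show ?thesis by (metis subset_mset.add_diff_inverse)
qed
lemma split_one: "G1 + G2 = add_mset X G' \<Longrightarrow>
   (\<exists>G1'. G1 = add_mset X G1' \<and> G' = G1' + G2) \<or> (\<exists>G2'. G2 = add_mset X G2' \<and> G' = G1 + G2')"
proof -
  assume h: "G1 + G2 = add_mset X G'"
  then have "X \<in># G1 + G2" by simp
  then consider "X \<in># G1" | "X \<in># G2" by auto
  then show ?thesis
  proof cases
    case 1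
    then obtain G1' where "G1 = add_mset X G1'" by (metis mset_add)
    then show ?thesis using h by auto
  next
    case 2
    then obtain G2' where "G2 = add_mset X G2'" by (metis mset_add)
    then show ?thesis using h by auto
  qed
qed

fun sub :: "'a fm \<Rightarrow> 'a fm set" where
  "sub Bot = {Bot}" | "sub (At p) = {At p}"
| "sub (Imp A B) = insert (Imp A B) (sub A \<union> sub B)" | "sub (Box A) = insert (Box A) (sub A)"

lemma sub_self: "A \<in> sub A" by (cases A) auto
lemma sub_trans: "B \<in> sub A \<Longrightarrow> sub B \<subseteq> sub A" by (induction A) auto
lemma sub_fin: "finite (sub A)" by (induction A) auto

definition fms :: "'a sequent \<Rightarrow> 'a fm set" where "fms S = set_mset (fst S) \<union> set_mset (snd S)"

lemma rule_sub: "rule_ok r S ps \<Longrightarrow> Q \<in> set ps \<Longrightarrow> x \<in> fms Q \<Longrightarrow> \<exists>y\<in>fms S. x \<in> sub y"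
proof (cases r)
  case Ax then show "rule_ok r S ps \<Longrightarrow> Q \<in> set ps \<Longrightarrow> x \<in> fms Q \<Longrightarrow> \<exists>y\<in>fms S. x \<in> sub y"
    by (cases S) auto
next
  case ImpL then show "rule_ok r S ps \<Longrightarrow> Q \<in> set ps \<Longrightarrow> x \<in> fms Q \<Longrightarrow> \<exists>y\<in>fms S. x \<in> sub y"
    by (cases S) (auto simp: fms_def; metis sub_self sub.simps UnCI insertCI)
next
  case ImpR then show "rule_ok r S ps \<Longrightarrow> Q \<in> set ps \<Longrightarrow> x \<in> fms Q \<Longrightarrow> \<exists>y\<in>fms S. x \<in> sub y"
    by (cases S) (auto simp: fms_def; metis sub_self sub.simps UnCI insertCI)
next
  case Refl then show "rule_ok r S ps \<Longrightarrow> Q \<in> set ps \<Longrightarrow> x \<in> fms Q \<Longrightarrow> \<exists>y\<in>fms S. x \<in> sub y"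
    by (cases S) (auto simp: fms_def; metis sub_self sub.simps UnCI insertCI)
next
  case BoxR
  show "rule_ok r S ps \<Longrightarrow> Q \<in> set ps \<Longrightarrow> x \<in> fms Q \<Longrightarrow> \<exists>y\<in>fms S. x \<in> sub y"
  proof -
    assume a: "rule_ok r S ps" "Q \<in> set ps" "x \<in> fms Q"
    obtain G D where S: "S = (G, D)" by fastforce
    obtain G' P D' A where h: "G = G' + image_mset Box P" "D = add_mset (Box A) D'"
      "ps = [(G' + image_mset Box P, add_mset A D'), (image_mset Box P, {#A#})]"
      using a(1) BoxR S by auto
    have "x \<in> fms S \<or> x = A" using a(2,3) h S by (auto simp: fms_def)
    then show ?thesis
    proof
      assume "x \<in> fms S" then show ?thesis using sub_self by blast
    next
      assume "x = A"
      moreover have "Box A \<in> fms S" using h S by (simp add: fms_def)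
      ultimately show ?thesis by (metis sub.simps(4) insertCI sub_self)
    qed
  qed
qed

context
  fixes N :: "nat list set" and lab :: "nat list \<Rightarrow> 'a sequent" and rl :: "nat list \<Rightarrow> rule"
  assumes ip: "inf_proof N lab rl"
begin

lemma root_in: "[] \<in> N" using ip by (simp add: inf_proof_def)

lemma prefix_in: "p @ q \<in> N \<Longrightarrow> p \<in> N"
proof (induction q rule: rev_induct)
  case (snoc x xs)
  have "(p @ xs) @ [x] \<in> N" using snoc.prems by simp
  then have "p @ xs \<in> N" using ip unfolding inf_proof_def by blast
  then show ?case using snoc.IH by blast
qed simp

lemma child_in: "p \<in> N \<Longrightarrow> i < arity (rl p) \<Longrightarrow> p @ [i] \<in> N"
  using ip by (simp add: inf_proof_def)

lemma node_ok: "p \<in> N \<Longrightarrow> rule_ok (rl p) (lab p) (map (\<lambda>i. lab (p @ [i])) [0..<arity (rl p)])"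
  using ip by (simp add: inf_proof_def)

definition SF where "SF = (\<Union>y\<in>fms (lab []). sub y)"

lemma SF_fin: "finite SF"
  unfolding SF_def fms_def by (simp add: sub_fin)

lemma sub_SF: "p \<in> N \<Longrightarrow> (\<Union>y\<in>fms (lab p). sub y) \<subseteq> SF"
proof (induction p rule: rev_induct)
  case Nil then show ?case by (simp add: SF_def)
next
  case (snoc i p)
  have pN: "p \<in> N" using snoc.prems prefix_in by blast
  have ia: "i < arity (rl p)" using snoc.prems pN ip unfolding inf_proof_def by blast
  have Q: "lab (p @ [i]) \<in> set (map (\<lambda>i. lab (p @ [i])) [0..<arity (rl p)])" using ia by auto
  show ?case
  proof
    fix z assume "z \<in> (\<Union>y\<in>fms (lab (p @ [i])). sub y)"
    then obtain x where x: "x \<in> fms (lab (p @ [i]))" "z \<in> sub x" by blast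
    obtain y where y: "y \<in> fms (lab p)" "x \<in> sub y" using rule_sub[OF node_ok[OF pN] Q x(1)] by blast
    have "z \<in> sub y" using x(2) y(2) sub_trans by blast
    then show "z \<in> SF" using snoc.IH[OF pN] y(1) by blast
  qed
qed

lemma box_SF: "p \<in> N \<Longrightarrow> Box A \<in># snd (lab p) \<Longrightarrow> A \<in> SF"
proof -
  assume "p \<in> N" "Box A \<in># snd (lab p)"
  then have "Box A \<in> fms (lab p)" by (simp add: fms_def)
  then have "A \<in> (\<Union>y\<in>fms (lab p). sub y)" by (metis UN_iff insertCI sub.simps(4) sub_self)
  then show ?thesis using sub_SF[OF \<open>p \<in> N\<close>] by blast
qed

definition R where "R = {(q, p). p \<in> N \<and> (\<exists>i. q = p @ [i] \<and> q \<in> N \<and> \<not> (rl p = BoxR \<and> i = 1))}"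

lemma R_intro: "p \<in> N \<Longrightarrow> p @ [i] \<in> N \<Longrightarrow> \<not> (rl p = BoxR \<and> i = 1) \<Longrightarrow> (p @ [i], p) \<in> R"
  unfolding R_def by blast

lemma wfR: "wf R"
proof (rule ccontr)
  assume "\<not> wf R"
  then obtain f where f: "\<And>n. (f (Suc n), f n) \<in> R" using wf_iff_no_infinite_down_chain by blast
  define m where "m = length (f 0)"
  define g where "g n = (if n < m then take n (f 0) else f (n - m))" for n
  have f0N: "f 0 \<in> N" using f[of 0] by (auto simp: R_def)
  have gstep: "g (Suc n) \<in> N \<and> (\<exists>i. g (Suc n) = g n @ [i])" for n
  proof (cases "Suc n < m")
    case True
    have "take (Suc n) (f 0) = take n (f 0) @ [f 0 ! n]" using True by (simp add: m_def take_Suc_conv_app_nth)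
    moreover have "take (Suc n) (f 0) \<in> N" using f0N prefix_in by (metis append_take_drop_id)
    ultimately show ?thesis using True by (simp add: g_def)
  next
    case False
    show ?thesis
    proof (cases "n < m")
      case True
      then have "n = m - 1" "m = Suc n" using False by auto
      then have "g (Suc n) = f 0" "g n = take n (f 0)" by (auto simp: g_def)
      moreover have "take n (f 0) @ [f 0 ! n] = f 0" using \<open>m = Suc n\<close> unfolding m_def
        by (metis lessI take_Suc_conv_app_nth take_all order_refl)
      ultimately show ?thesis using f0N by metis
    next
      case False
      then have "g (Suc n) = f (Suc (n - m))" "g n = f (n - m)" by (auto simp: g_def Suc_diff_le)
      then show ?thesis using f[of "n - m"] by (auto simp: R_def)
    qed
  qed
  have g0: "g 0 = []" by (simp add: g_def m_def)
  have "infinite {n. rl (g n) = BoxR \<and> g (Suc n) = g n @ [1]}"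
    using ip g0 gstep unfolding inf_proof_def by blast
  moreover have "{n. rl (g n) = BoxR \<and> g (Suc n) = g n @ [1]} \<subseteq> {..<m}"
  proof
    fix n assume n: "n \<in> {n. rl (g n) = BoxR \<and> g (Suc n) = g n @ [1]}"
    show "n \<in> {..<m}"
    proof (rule ccontr)
      assume "n \<notin> {..<m}"
      then have "g (Suc n) = f (Suc (n - m))" "g n = f (n - m)" by (auto simp: g_def Suc_diff_le)
      then show False using f[of "n - m"] n by (auto simp: R_def)
    qed
  qed
  ultimately show False using finite_subset by blast
qed

end

context
  fixes N :: "nat list set" and lab :: "nat list \<Rightarrow> 'a sequent" and rl :: "nat list \<Rightarrow> rule"
  assumes ip: "inf_proof N lab rl"
begin

lemma boxed_sub: "B1 + B2 = image_mset Box P \<Longrightarrow> \<forall>x\<in>#B1. \<exists>C. x = Box C"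
proof
  fix x assume h: "B1 + B2 = image_mset Box P" "x \<in># B1"
  then have "x \<in># image_mset Box P" by (metis union_iff)
  then show "\<exists>C. x = Box C" by auto
qed
lemma boxed_sub2: "B1 + B2 = image_mset Box P \<Longrightarrow> \<forall>x\<in>#B2. \<exists>C. x = Box C"
proof
  fix x assume h: "B1 + B2 = image_mset Box P" "x \<in># B2"
  then have "x \<in># image_mset Box P" by (metis union_iff)
  then show "\<exists>C. x = Box C" by auto
qed

lemma main_all:
  "\<forall>L1 L2. finite L1 \<longrightarrow> finite L2 \<longrightarrow> card (SF lab - L1) + card (SF lab - L2) = n \<longrightarrow>
     (\<forall>p\<in>N. \<forall>G1 G2 D1 D2. lab p = (G1 + G2, D1 + D2) \<longrightarrow> Interp L1 L2 G1 G2 D1 D2)"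
proof (induction n rule: less_induct)
  case (less n)
  show ?case
  proof (intro allI impI)
    fix L1 L2 :: "'a fm set"
    assume fin: "finite L1" "finite L2" and n: "card (SF lab - L1) + card (SF lab - L2) = n"
    have outer: "\<And>L1' L2' q G1 G2 D1 D2. finite L1' \<Longrightarrow> finite L2' \<Longrightarrow>
       card (SF lab - L1') + card (SF lab - L2') < n \<Longrightarrow> q \<in> N \<Longrightarrow> lab q = (G1 + G2, D1 + D2) \<Longrightarrow>
       Interp L1' L2' G1 G2 D1 D2"
    proof -
      fix L1' L2' q G1 G2 D1 D2
      assume h: "finite L1'" "finite L2'" "card (SF lab - L1') + card (SF lab - L2') < n" "q \<in> N"
        "lab q = (G1 + G2, D1 + D2)"
      have "\<forall>p\<in>N. \<forall>G1 G2 D1 D2. lab p = (G1 + G2, D1 + D2) \<longrightarrow> Interp L1' L2' G1 G2 D1 D2"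
        using less.IH[OF h(3)] h(1,2) by simp
      then show "Interp L1' L2' G1 G2 D1 D2" using h(4,5) by simp
    qed
    have "p \<in> N \<longrightarrow> (\<forall>G1 G2 D1 D2. lab p = (G1 + G2, D1 + D2) \<longrightarrow> Interp L1 L2 G1 G2 D1 D2)" for p
    proof (induction p rule: wf_induct[OF wfR[OF ip]])
      case (1 p)
      have IH: "\<forall>q. (q, p) \<in> R N rl \<longrightarrow> q \<in> N \<longrightarrow>
        (\<forall>G1 G2 D1 D2. lab q = (G1 + G2, D1 + D2) \<longrightarrow> Interp L1 L2 G1 G2 D1 D2)" using 1 by blast
      show "p \<in> N \<longrightarrow> (\<forall>G1 G2 D1 D2. lab p = (G1 + G2, D1 + D2) \<longrightarrow> Interp L1 L2 G1 G2 D1 D2)"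
      proof (intro impI allI)
        fix G1 G2 D1 D2
        assume pN: "p \<in> N" and lp: "lab p = (G1 + G2, D1 + D2)"
        have ok: "rule_ok (rl p) (G1 + G2, D1 + D2) (map (\<lambda>i. lab (p @ [i])) [0..<arity (rl p)])"
          using node_ok[OF ip pN] lp by simp
        have ch: "\<And>i G1 G2 D1 D2. i < arity (rl p) \<Longrightarrow> \<not> (rl p = BoxR \<and> i = 1) \<Longrightarrow>
            lab (p @ [i]) = (G1 + G2, D1 + D2) \<Longrightarrow> Interp L1 L2 G1 G2 D1 D2"
        proof -
          fix i G1 G2 D1 D2
          assume a: "i < arity (rl p)" "\<not> (rl p = BoxR \<and> i = 1)" "lab (p @ [i]) = (G1 + G2, D1 + D2)"
          have cN: "p @ [i] \<in> N" using child_in[OF ip pN a(1)] .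
          have "(p @ [i], p) \<in> R N rl" using R_intro[OF ip pN cN a(2)] .
          from IH[rule_format, OF this cN a(3)] show "Interp L1 L2 G1 G2 D1 D2" .
        qed
        show "Interp L1 L2 G1 G2 D1 D2"
        proof (cases "rl p")
          case Ax
          then show ?thesis using ok interp_ax[OF fin] by auto
        next
          case ImpL
          with ok obtain G' A B where e: "G1 + G2 = add_mset (Imp A B) G'"
            "lab (p @ [0]) = (add_mset B G', D1 + D2)" "lab (p @ [1]) = (G', add_mset A (D1 + D2))"
            by (auto simp: upt_rec)
          have c0: "\<And>G1 G2 D1 D2. lab (p @ [0]) = (G1 + G2, D1 + D2) \<Longrightarrow> Interp L1 L2 G1 G2 D1 D2"
            using ch[of 0] ImpL by simp
          have c1: "\<And>G1 G2 D1 D2. lab (p @ [1]) = (G1 + G2, D1 + D2) \<Longrightarrow> Interp L1 L2 G1 G2 D1 D2"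
            using ch[of 1] ImpL by simp
          from split_one[OF e(1)] show ?thesis
          proof (elim disjE exE conjE)
            fix G1' assume h: "G1 = add_mset (Imp A B) G1'" "G' = G1' + G2"
            show ?thesis unfolding h(1)
              by (rule interp_impL1[OF fin c0 c1]) (use e h in auto)
          next
            fix G2' assume h: "G2 = add_mset (Imp A B) G2'" "G' = G1 + G2'"
            show ?thesis unfolding h(1)
              by (rule interp_impL2[OF fin c0 c1]) (use e h in auto)
          qed
        next
          case ImpR
          with ok obtain D' A B where e: "D1 + D2 = add_mset (Imp A B) D'"
            "lab (p @ [0]) = (add_mset A (G1 + G2), add_mset B D')"
            by (auto simp: upt_rec)
          have c0: "\<And>G1 G2 D1 D2. lab (p @ [0]) = (G1 + G2, D1 + D2) \<Longrightarrow> Interp L1 L2 G1 G2 D1 D2"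
            using ch[of 0] ImpR by simp
          from split_one[OF e(1)] show ?thesis
          proof (elim disjE exE conjE)
            fix D1' assume h: "D1 = add_mset (Imp A B) D1'" "D' = D1' + D2"
            show ?thesis unfolding h(1)
              by (rule interp_impR1[OF fin c0]) (use e h in auto)
          next
            fix D2' assume h: "D2 = add_mset (Imp A B) D2'" "D' = D1 + D2'"
            show ?thesis unfolding h(1)
              by (rule interp_impR2[OF fin c0]) (use e h in auto)
          qed
        next
          case Refl
          with ok obtain G' B where e: "G1 + G2 = add_mset (Box B) G'"
            "lab (p @ [0]) = (add_mset (Box B) (add_mset B G'), D1 + D2)"
            by (auto simp: upt_rec)
          have c0: "\<And>G1 G2 D1 D2. lab (p @ [0]) = (G1 + G2, D1 + D2) \<Longrightarrow> Interp L1 L2 G1 G2 D1 D2"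
            using ch[of 0] Refl by simp
          from split_one[OF e(1)] show ?thesis
          proof (elim disjE exE conjE)
            fix G1' assume h: "G1 = add_mset (Box B) G1'" "G' = G1' + G2"
            show ?thesis unfolding h(1)
              by (rule interp_refl1[OF fin c0]) (use e h in auto)
          next
            fix G2' assume h: "G2 = add_mset (Box B) G2'" "G' = G1 + G2'"
            show ?thesis unfolding h(1)
              by (rule interp_refl2[OF fin c0]) (use e h in auto)
          qed
        next
          case BoxR
          with ok obtain G' P D' A where e: "G1 + G2 = G' + image_mset Box P"
            "D1 + D2 = add_mset (Box A) D'"
            "lab (p @ [0]) = (G1 + G2, add_mset A D')" "lab (p @ [1]) = (image_mset Box P, {#A#})"
            by (auto simp: upt_rec)
          have c0: "\<And>G1 G2 D1 D2. lab (p @ [0]) = (G1 + G2, D1 + D2) \<Longrightarrow> Interp L1 L2 G1 G2 D1 D2"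
            using ch[of 0] BoxR by simp
          have p1N: "p @ [1] \<in> N" using child_in[OF ip pN, of 1] BoxR by simp
          have ASF: "A \<in> SF lab" using box_SF[OF ip pN, of A] lp e(2) by simp
          obtain B1 B2 where b: "B1 \<subseteq># G1" "B2 \<subseteq># G2" "B1 + B2 = image_mset Box P"
            using split_box[OF e(1)] by blast
          have fSF: "finite (SF lab)" using SF_fin[OF ip] .
          from split_one[OF e(2)] show ?thesis
          proof (elim disjE exE conjE)
            fix D1' assume h: "D1 = add_mset (Box A) D1'" "D' = D1' + D2"
            show ?thesis
            proof (cases "A \<in> L1")
              case True
              show ?thesis unfolding h(1)
                by (rule interp_boxT1[OF fin c0 True]) (use e h in auto)
            next
              case False
              have "card (SF lab - insert A L1) < card (SF lab - L1)"
              proof -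
                have eq: "SF lab - insert A L1 = (SF lab - L1) - {A}" by auto
                have "finite (SF lab - L1)" "A \<in> SF lab - L1" using fSF ASF False by auto
                from card_Diff1_less[OF this] show ?thesis by (simp only: eq)
              qed
              then have "Interp (insert A L1) L2 B1 B2 {#A#} {#}"
                using outer[OF _ fin(2) _ p1N, of "insert A L1" B1 B2 "{#A#}" "{#}"] fin n e(4) b(3)
                by simp
              note ih = this
              show ?thesis
                by (rule interp_box1[OF fin boxed_sub[OF b(3)] boxed_sub2[OF b(3)] b(1,2) _ ih]) (simp add: h)
            qed
          next
            fix D2' assume h: "D2 = add_mset (Box A) D2'" "D' = D1 + D2'"
            show ?thesis
            proof (cases "A \<in> L2")
              case True
              show ?thesis unfolding h(1)
                by (rule interp_boxT2[OF fin c0 True]) (use e h in auto)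
            next
              case False
              have "card (SF lab - insert A L2) < card (SF lab - L2)"
              proof -
                have eq: "SF lab - insert A L2 = (SF lab - L2) - {A}" by auto
                have "finite (SF lab - L2)" "A \<in> SF lab - L2" using fSF ASF False by auto
                from card_Diff1_less[OF this] show ?thesis by (simp only: eq)
              qed
              then have "Interp L1 (insert A L2) B1 B2 {#} {#A#}"
                using outer[OF fin(1) _ _ p1N, of "insert A L2" B1 B2 "{#}" "{#A#}"] fin n e(4) b(3)
                by simp
              note ih = this
              show ?thesis
                by (rule interp_box2[OF fin boxed_sub[OF b(3)] boxed_sub2[OF b(3)] b(1,2) _ ih]) (simp add: h)
            qed
          qed
        qed
      qed
    qed
    then show "\<forall>p\<in>N. \<forall>G1 G2 D1 D2. lab p = (G1 + G2, D1 + D2) \<longrightarrow> Interp L1 L2 G1 G2 D1 D2"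
      by blast
  qed
qed

end

theorem lemma7p1:
  fixes \<Lambda>1 \<Lambda>2 :: "'a fm set" and \<Gamma>1 \<Gamma>2 \<Delta>1 \<Delta>2 :: "'a fm multiset"
  assumes "finite \<Lambda>1" and "finite \<Lambda>2"
    and "Grz_inf_provable (\<Gamma>1 + \<Gamma>2, \<Delta>1 + \<Delta>2)"
  shows "\<exists>I. pos I \<subseteq> neg_seq (\<Gamma>1, \<Delta>1) \<inter> pos_seq (\<Gamma>2, \<Delta>2)
           \<and> neg I \<subseteq> pos_seq (\<Gamma>1, \<Delta>1) \<inter> neg_seq (\<Gamma>2, \<Delta>2)
           \<and> (\<forall>xs ys. set xs = star \<Lambda>1 \<union> set_mset \<Gamma>1 \<and> set ys = set_mset \<Delta>1 \<union> {I}
                 \<longrightarrow> Grz (Imp (conj xs) (disj ys)))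
           \<and> (\<forall>xs ys. set xs = star \<Lambda>2 \<union> {I} \<union> set_mset \<Gamma>2 \<and> set ys = set_mset \<Delta>2
                 \<longrightarrow> Grz (Imp (conj xs) (disj ys)))"
proof -
  obtain N lab rl where ip: "inf_proof N lab rl" and r: "lab [] = (\<Gamma>1 + \<Gamma>2, \<Delta>1 + \<Delta>2)"
    using assms(3) unfolding Grz_inf_provable_def by blast
  have "Interp \<Lambda>1 \<Lambda>2 \<Gamma>1 \<Gamma>2 \<Delta>1 \<Delta>2"
    using main_all[OF ip, rule_format, OF assms(1,2) refl root_in[OF ip] r] .
  then show ?thesis unfolding Interp_def G_def by blast
qed

end
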